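(* Let $f(z)=z+a_2z^2+a_3z^3+\cdots$ belong to the class $\mathcal{U}$. Then $$|a_2a_4-a_3^2|\le 1\quad\text{and}\quad \left|a_3(a_2a_4-a_3^2)-a_4(a_4-a_2a_3)+a_5(a_3-a_2^2)\right|\le \frac14,$$ and both estimates are sharp.
   Context: Let $\mathbb{D}=\{z\in\mathbb{C}:|z|<1\}$ and let $\mathcal{A}$ be the family of functions $f$ analytic in $\mathbb{D}$ with $f(0)=0$, $f'(0)=1$. The class $\mathcal{U}$ consists of all $f\in\mathcal{A}$ such that $\left|\left[\frac{z}{f(z)}\right]^2 f'(z)-1\right|<1$ for all $z\in\mathbb{D}$. The quantities $a_2a_4-a_3^2$ and $a_3(a_2a_4-a_3^2)-a_4(a_4-a_2a_3)+a_5(a_3-a_2^2)$ are the second Hankel determinant $H_2(2)$ and the third Hankel determinant $H_3(1)$ of $f$, respectively. *)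

theory Defs
  imports "HOL-Analysis.Analysis"
begin

definition class_A :: "(complex \<Rightarrow> complex) set" where
  "class_A = {f. f holomorphic_on ball 0 1 \<and> f 0 = 0 \<and> deriv f 0 = 1}"

text \<open>The expression z/f(z) is understood (as in the paper) as the
  nonvanishing analytic function with value 1 at 0; the condition at z = 0 is
  automatic (the left side equals 0 there), so it is imposed for z \<noteq> 0, where
  f(z) \<noteq> 0 is required for the expression to make sense.\<close>
definition class_U :: "(complex \<Rightarrow> complex) set" where
  "class_U = {f \<in> class_A. \<forall>z \<in> ball 0 1 - {0}.
      f z \<noteq> 0 \<and> cmod ((z / f z)^2 * deriv f z - 1) < 1}"

definition coeff :: "(complex \<Rightarrow> complex) \<Rightarrow> nat \<Rightarrow> complex" where
  "coeff f n = (deriv ^^ n) f 0 / of_nat (fact n)"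

definition H22 :: "(complex \<Rightarrow> complex) \<Rightarrow> complex" where
  "H22 f = coeff f 2 * coeff f 4 - (coeff f 3)^2"

definition H31 :: "(complex \<Rightarrow> complex) \<Rightarrow> complex" where
  "H31 f = coeff f 3 * (coeff f 2 * coeff f 4 - (coeff f 3)^2)
         - coeff f 4 * (coeff f 4 - coeff f 2 * coeff f 3)
         + coeff f 5 * (coeff f 3 - (coeff f 2)^2)"

end

theory Submission
  imports Defs "HOL-Complex_Analysis.Complex_Analysis"
begin



lemma coeff_fps: assumes "f has_fps_expansion F" shows "Defs.coeff f n = fps_nth F n"
  using fps_nth_fps_expansion[OF assms] by (simp add: Defs.coeff_def)

lemma coeffs_from_G:
  assumes "f has_fps_expansion F" "F * G = fps_X" "fps_nth G 0 = 1"
  shows "H22 f = fps_nth G 1*fps_nth G 3 - (fps_nth G 2)^2"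
    "H31 f = fps_nth G 2*fps_nth G 4 - (fps_nth G 3)^2"
proof -
  have e: "fps_nth (F*G) n = fps_nth fps_X n" for n using assms(2) by simp
  have e0: "fps_nth F 0 = 0" using e[of 0] assms(3) by (simp add: fps_mult_nth)
  have e1: "fps_nth F 1 = 1" using e[of 1] assms(3) e0 by (simp add: fps_mult_nth)
  have e2: "fps_nth F 2 + fps_nth F 1*fps_nth G 1 = 0" using e[of 2] assms(3) e0 by (simp add: fps_mult_nth numeral_2_eq_2 algebra_simps)
  have e3: "fps_nth F 3 + fps_nth F 2*fps_nth G 1 + fps_nth F 1*fps_nth G 2 = 0" using e[of 3] assms(3) e0 by (simp add: fps_mult_nth eval_nat_numeral algebra_simps)
  have e4: "fps_nth F 4 + fps_nth F 3*fps_nth G 1 + fps_nth F 2*fps_nth G 2 + fps_nth F 1*fps_nth G 3 = 0" using e[of 4] assms(3) e0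
    by (simp add: fps_mult_nth eval_nat_numeral algebra_simps)
  have e5: "fps_nth F 5 + fps_nth F 4*fps_nth G 1 + fps_nth F 3*fps_nth G 2 + fps_nth F 2*fps_nth G 3 + fps_nth F 1*fps_nth G 4 = 0" using e[of 5] assms(3) e0
    by (simp add: fps_mult_nth eval_nat_numeral algebra_simps)
  define b1 where "b1 = fps_nth G 1"
  define b2 where "b2 = fps_nth G 2"
  define b3 where "b3 = fps_nth G 3"
  define b4 where "b4 = fps_nth G 4"
  have a2: "fps_nth F 2 = - b1" using e1 e2 unfolding b1_def by (simp add: algebra_simps add_eq_0_iff2)
  have a3: "fps_nth F 3 = b1^2 - b2" using e1 e3 a2 unfolding b1_def b2_def by (simp add: algebra_simps power2_eq_square add_eq_0_iff2)
  have a4: "fps_nth F 4 = 2*b1*b2 - b1^3 - b3" using e1 e4 a2 a3 unfolding b1_def b2_def b3_def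
    by (simp add: algebra_simps power2_eq_square power3_eq_cube add_eq_0_iff2)
  have a5: "fps_nth F 5 = b1^4 - 3*b1^2*b2 + b2^2 + 2*b1*b3 - b4" using e1 e5 a2 a3 a4 unfolding b1_def b2_def b3_def b4_def
    by (simp add: algebra_simps power2_eq_square power3_eq_cube power4_eq_xxxx add_eq_0_iff2)
  show "H22 f = fps_nth G 1*fps_nth G 3 - (fps_nth G 2)^2"
    "H31 f = fps_nth G 2*fps_nth G 4 - (fps_nth G 3)^2"
    unfolding H22_def H31_def coeff_fps[OF assms(1)] a2 a3 a4 a5 b1_def[symmetric] b2_def[symmetric]
      b3_def[symmetric] b4_def[symmetric]
    by (simp_all add: algebra_simps power2_eq_square power3_eq_cube power4_eq_xxxx)
qed


lemma fps_exp_unique: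
  fixes f g :: "complex \<Rightarrow> complex"
  assumes "f has_fps_expansion A" "g has_fps_expansion B" "eventually (\<lambda>z. f z = g z) (nhds 0)"
  shows "A = B"
proof (rule fps_ext)
  fix n
  have "f has_fps_expansion B" using has_fps_expansion_cong[OF assms(3) refl] assms(2) by simp
  then show "fps_nth A n = fps_nth B n"
    using fps_nth_fps_expansion[OF assms(1)] fps_nth_fps_expansion[of f B] by simp
qed

lemma ev_ball: "eventually (\<lambda>z. z \<in> ball 0 (1::real)) (nhds (0::complex))"
  by (intro eventually_nhds_in_open) auto

lemma ev_ball_eq: "(\<And>z. z \<in> ball 0 1 \<Longrightarrow> f z = g z) \<Longrightarrow> eventually (\<lambda>z. f z = (g z::complex)) (nhds (0::complex))"
  using ev_ball by (rule eventually_mono) auto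

lemma hol_fps: "f holomorphic_on ball 0 1 \<Longrightarrow> f has_fps_expansion fps_expansion f 0"
  by (rule has_fps_expansion_fps_expansion) auto

lemma schwarz_factor:
  assumes hol: "\<phi> holomorphic_on ball 0 1" and z0: "\<phi> 0 = 0"
    and bd: "\<And>z. z \<in> ball 0 1 \<Longrightarrow> norm (\<phi> z) \<le> 1"
  obtains \<psi> where "\<psi> holomorphic_on ball 0 1" "\<And>z. z \<in> ball 0 1 \<Longrightarrow> norm (\<psi> z) \<le> 1"
    "\<And>z. z \<in> ball 0 1 \<Longrightarrow> \<phi> z = z * \<psi> z"
proof -
  obtain \<psi> where hol\<psi>: "\<psi> holomorphic_on ball 0 1" and eq: "\<And>z. norm z < 1 \<Longrightarrow> \<phi> z = z * \<psi> z"
      and d0: "deriv \<phi> 0 = \<psi> 0"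
    using Schwarz3[OF hol z0] by blast
  have key: "norm (\<phi> \<xi>) \<le> norm \<xi> \<and> norm (deriv \<phi> 0) \<le> 1" if xi: "norm \<xi> < 1" for \<xi>
  proof -
    have "t * norm (\<phi> \<xi>) \<le> norm \<xi> \<and> t * norm (deriv \<phi> 0) \<le> 1" if t: "0 < t" "t < 1" for t
    proof -
      let ?g = "\<lambda>z. of_real t * \<phi> z"
      have hg: "?g holomorphic_on ball 0 1" by (intro holomorphic_intros hol)
      have g0: "?g 0 = 0" by (simp add: z0)
      have gno: "norm (?g z) < 1" if "norm z < 1" for z
      proof -
        have "norm (\<phi> z) \<le> 1" using bd that by simp
        then have "t * norm (\<phi> z) \<le> t" using t by (simp add: mult_left_le)
        then have "t * norm (\<phi> z) < 1" using t by linarith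
        then show ?thesis using t by (simp add: norm_mult)
      qed
      have s1: "norm (?g \<xi>) \<le> norm \<xi>" and s2: "norm (deriv ?g 0) \<le> 1"
        using Schwarz_Lemma[of ?g, OF hg g0 gno xi] by auto
      have "deriv ?g 0 = of_real t * deriv \<phi> 0"
        by (rule deriv_cmult) (rule holomorphic_on_imp_differentiable_at[OF hol], auto)
      then show ?thesis using s1 s2 t by (simp add: norm_mult)
    qed
    then show ?thesis by (metis field_le_mult_one_interval)
  qed
  show ?thesis
  proof (rule that[OF hol\<psi>])
    fix z :: complex assume z: "z \<in> ball 0 1"
    show "\<phi> z = z * \<psi> z" using eq z by simp
    show "norm (\<psi> z) \<le> 1"
    proof (cases "z = 0")
      case True then show ?thesis using key[of 0] d0 by simp
    next
      case False
      have "norm z * norm (\<psi> z) \<le> norm z" using key[of z] eq[of z] z by (simp add: norm_mult)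
      then show ?thesis using False by simp
    qed
  qed
qed

lemma maxmod_const:
  assumes hol: "\<omega> holomorphic_on ball 0 1" and bd: "\<And>z. z \<in> ball 0 1 \<Longrightarrow> norm (\<omega> z) \<le> 1"
    and z0: "z0 \<in> ball 0 1" and n1: "norm (\<omega> z0) = 1" and z: "z \<in> ball 0 1"
  shows "\<omega> z = \<omega> z0"
proof -
  have "\<omega> constant_on ball 0 1"
    by (rule maximum_modulus_principle[OF hol _ _ _ order_refl z0]) (use bd n1 in auto)
  then obtain c where c: "\<And>z. z \<in> ball 0 1 \<Longrightarrow> \<omega> z = c" unfolding constant_on_def by blast
  show "\<omega> z = \<omega> z0" using c z0 z by simp
qed

lemma schur_const:
  assumes hol: "\<omega> holomorphic_on ball 0 1" and bd: "\<And>z. z \<in> ball 0 1 \<Longrightarrow> norm (\<omega> z) \<le> 1"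
    and n1: "norm (\<omega> 0) = 1" and n: "n \<ge> 1"
  shows "fps_nth (fps_expansion \<omega> 0) n = 0"
proof -
  have "fps_expansion \<omega> 0 = fps_const (\<omega> 0)"
    by (rule fps_exp_unique[OF hol_fps[OF hol] has_fps_expansion_const ev_ball_eq])
       (rule maxmod_const[OF hol bd _ n1], auto)
  then show ?thesis using n by simp
qed

lemma schur_step:
  assumes hol: "\<omega> holomorphic_on ball 0 1" and bd: "\<And>z. z \<in> ball 0 1 \<Longrightarrow> norm (\<omega> z) \<le> 1"
    and lt: "norm (\<omega> 0) < 1"
  obtains \<omega>1 where "\<omega>1 holomorphic_on ball 0 1" "\<And>z. z \<in> ball 0 1 \<Longrightarrow> norm (\<omega>1 z) \<le> 1"
    "fps_nth (fps_expansion \<omega> 0) 1 = (1 - cnj (\<omega> 0) * \<omega> 0) * fps_nth (fps_expansion \<omega>1 0) 0"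
    "fps_nth (fps_expansion \<omega> 0) 2 = (1 - cnj (\<omega> 0) * \<omega> 0) * fps_nth (fps_expansion \<omega>1 0) 1
        - cnj (\<omega> 0) * fps_nth (fps_expansion \<omega> 0) 1 * fps_nth (fps_expansion \<omega>1 0) 0"
proof -
  define c where "c = \<omega> 0"
  have strict: "norm (\<omega> z) < 1" if z: "z \<in> ball 0 1" for z
  proof (rule ccontr)
    assume "\<not> norm (\<omega> z) < 1"
    then have "norm (\<omega> z) = 1" using bd[OF z] by simp
    then have "\<omega> 0 = \<omega> z" using maxmod_const[OF hol bd z] by simp
    then show False using lt \<open>norm (\<omega> z) = 1\<close> by simp
  qed
  have den: "1 - cnj c * \<omega> z \<noteq> 0" if z: "z \<in> ball 0 1" for z
  proof -
    have "norm (cnj c * \<omega> z) < 1"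
    proof -
      have "norm c * norm (\<omega> z) \<le> norm (\<omega> z)" using lt unfolding c_def by (intro mult_left_le_one_le) auto
      then show ?thesis using strict[OF z] by (simp add: norm_mult)
    qed
    then show ?thesis by auto
  qed
  define \<psi> where "\<psi> z = (\<omega> z - c) / (1 - cnj c * \<omega> z)" for z
  have hol\<psi>: "\<psi> holomorphic_on ball 0 1" unfolding \<psi>_def using den by (intro holomorphic_intros hol) auto
  have \<psi>0: "\<psi> 0 = 0" unfolding \<psi>_def c_def by simp
  have bd\<psi>: "norm (\<psi> z) \<le> 1" if z: "z \<in> ball 0 1" for z
  proof -
    have "\<psi> z = Moebius_function 0 c (\<omega> z)" unfolding \<psi>_def Moebius_function_simple ..
    then show ?thesis using Moebius_function_norm_lt_1[of c "\<omega> z" 0] lt strict[OF z] unfolding c_def by simp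
  qed
  obtain \<omega>1 where hol1: "\<omega>1 holomorphic_on ball 0 1" and bd1: "\<And>z. z \<in> ball 0 1 \<Longrightarrow> norm (\<omega>1 z) \<le> 1"
      and eq1: "\<And>z. z \<in> ball 0 1 \<Longrightarrow> \<psi> z = z * \<omega>1 z"
    using schwarz_factor[OF hol\<psi> \<psi>0 bd\<psi>] by blast
  define W where "W = fps_expansion \<omega> 0"
  define P where "P = fps_expansion \<omega>1 0"
  have hW: "\<omega> has_fps_expansion W" unfolding W_def by (rule hol_fps[OF hol])
  have hP: "\<omega>1 has_fps_expansion P" unfolding P_def by (rule hol_fps[OF hol1])
  have W0: "fps_nth W 0 = c" unfolding W_def c_def by (simp add: fps_expansion_def)
  have e1: "(\<lambda>z. (z * \<omega>1 z) * (1 - cnj c * \<omega> z)) has_fps_expansion (fps_X * P) * (1 - fps_const (cnj c) * W)"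
    by (intro has_fps_expansion_mult has_fps_expansion_diff has_fps_expansion_cmult_left hW hP
        has_fps_expansion_fps_X has_fps_expansion_1)
  have e2: "(\<lambda>z. \<omega> z - c) has_fps_expansion W - fps_const c"
    by (intro has_fps_expansion_diff hW has_fps_expansion_const)
  have E: "(fps_X * P) * (1 - fps_const (cnj c) * W) = W - fps_const c"
  proof (rule fps_exp_unique[OF e1 e2 ev_ball_eq])
    fix z :: complex assume z: "z \<in> ball 0 1"
    have "z * \<omega>1 z = \<psi> z" using eq1[OF z] by simp
    then show "z * \<omega>1 z * (1 - cnj c * \<omega> z) = \<omega> z - c" using den[OF z] unfolding \<psi>_def by simp
  qed
  have E1: "fps_nth ((fps_X * P) * (1 - fps_const (cnj c) * W)) 1 = fps_nth W 1" using E by simp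
  have E2: "fps_nth ((fps_X * P) * (1 - fps_const (cnj c) * W)) 2 = fps_nth W 2" using E by simp
  show ?thesis
  proof (rule that[OF hol1 bd1])
    show "fps_nth (fps_expansion \<omega> 0) 1 = (1 - cnj (\<omega> 0) * \<omega> 0) * fps_nth (fps_expansion \<omega>1 0) 0"
      using E1 W0 unfolding W_def[symmetric] P_def[symmetric] c_def[symmetric]
      by (simp add: fps_mult_nth algebra_simps)
    show "fps_nth (fps_expansion \<omega> 0) 2 = (1 - cnj (\<omega> 0) * \<omega> 0) * fps_nth (fps_expansion \<omega>1 0) 1
        - cnj (\<omega> 0) * fps_nth (fps_expansion \<omega> 0) 1 * fps_nth (fps_expansion \<omega>1 0) 0"
      using E2 W0 unfolding W_def[symmetric] P_def[symmetric] c_def[symmetric]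
      by (simp add: fps_mult_nth numeral_2_eq_2 algebra_simps)
  qed
qed


lemma cnj_mult_self: "1 - cnj c * c = complex_of_real (1 - (norm c)^2)"
  using complex_norm_square[of c] by (simp add: mult.commute)

lemma schur_SP:
  assumes hol: "\<omega> holomorphic_on ball 0 1" and bd: "\<And>z. z \<in> ball 0 1 \<Longrightarrow> norm (\<omega> z) \<le> 1"
  shows "norm (fps_nth (fps_expansion \<omega> 0) 1) \<le> 1 - (norm (fps_nth (fps_expansion \<omega> 0) 0))^2"
proof -
  have W0: "fps_nth (fps_expansion \<omega> 0) 0 = \<omega> 0" by (simp add: fps_expansion_def)
  have le: "norm (\<omega> 0) \<le> 1" using bd[of 0] by simp
  show ?thesis
  proof (cases "norm (\<omega> 0) = 1")
    case True
    then show ?thesis using schur_const[OF hol bd True, of 1] W0 by simp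
  next
    case False
    then have lt: "norm (\<omega> 0) < 1" using le by simp
    obtain \<omega>1 where hol1: "\<omega>1 holomorphic_on ball 0 1" and bd1: "\<And>z. z \<in> ball 0 1 \<Longrightarrow> norm (\<omega>1 z) \<le> 1"
      and s1: "fps_nth (fps_expansion \<omega> 0) 1 = (1 - cnj (\<omega> 0) * \<omega> 0) * fps_nth (fps_expansion \<omega>1 0) 0"
      using schur_step[OF hol bd lt] by blast
    have P0: "fps_nth (fps_expansion \<omega>1 0) 0 = \<omega>1 0" by (simp add: fps_expansion_def)
    have "norm (\<omega>1 0) \<le> 1" using bd1[of 0] by simp
    moreover have "0 \<le> 1 - (norm (\<omega> 0))^2" using le by (simp add: power_le_one)
    ultimately have "(1 - (norm (\<omega> 0))^2) * norm (\<omega>1 0) \<le> 1 - (norm (\<omega> 0))^2"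
      by (simp add: mult_left_le)
    moreover have "fps_nth (fps_expansion \<omega> 0) 1 = complex_of_real (1 - (norm (\<omega> 0))^2) * \<omega>1 0"
      using s1 P0 by (simp only: cnj_mult_self)
    moreover have "norm (complex_of_real (1 - (norm (\<omega> 0))^2) * \<omega>1 0) = (1 - (norm (\<omega> 0))^2) * norm (\<omega>1 0)"
      using \<open>0 \<le> 1 - (norm (\<omega> 0))^2\<close> by (simp only: norm_mult norm_of_real abs_of_nonneg)
    ultimately show ?thesis using W0 by simp
  qed
qed

lemma carlson_real:
  fixes x u s :: real
  assumes x: "0 \<le> x" "x < 1" and s: "s = 1 - x^2" and u: "0 \<le> u" "u \<le> 1"
  shows "s * (4 * x * (1 - u^2) + (4 * x^2 + 3 * s) * u^2) \<le> 3"
proof -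
  have s0: "0 \<le> s" using x s by (simp add: power_le_one)
  have "s * (4 * x * (1 - u^2) + (4 * x^2 + 3 * s) * u^2) = s * (4 * x + u^2 * ((1 - x) * (3 - x)))"
    unfolding s by (simp add: algebra_simps power2_eq_square)
  also have "\<dots> \<le> s * (4 * x + 1 * ((1 - x) * (3 - x)))"
  proof -
    have "u^2 \<le> 1" using u by (simp add: power_le_one)
    moreover have "0 \<le> (1 - x) * (3 - x)" using x by simp
    ultimately have "u^2 * ((1 - x) * (3 - x)) \<le> 1 * ((1 - x) * (3 - x))"
      by (intro mult_right_mono) auto
    then show ?thesis using s0 by (intro mult_left_mono) auto
  qed
  also have "\<dots> = 3 - 2 * x^2 - x^4" unfolding s by (simp add: algebra_simps power2_eq_square power4_eq_xxxx)
  also have "\<dots> \<le> 3" using x by (simp add: zero_le_power) (smt (verit) zero_le_power zero_le_power2)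
  finally show ?thesis .
qed

lemma schur_carlson:
  assumes hol: "\<omega> holomorphic_on ball 0 1" and bd: "\<And>z. z \<in> ball 0 1 \<Longrightarrow> norm (\<omega> z) \<le> 1"
  shows "norm (4 * fps_nth (fps_expansion \<omega> 0) 0 * fps_nth (fps_expansion \<omega> 0) 2
               - 3 * (fps_nth (fps_expansion \<omega> 0) 1)^2) \<le> 3"
proof -
  have W0: "fps_nth (fps_expansion \<omega> 0) 0 = \<omega> 0" by (simp add: fps_expansion_def)
  have le: "norm (\<omega> 0) \<le> 1" using bd[of 0] by simp
  show ?thesis
  proof (cases "norm (\<omega> 0) = 1")
    case True
    then show ?thesis using schur_const[OF hol bd True, of 1] schur_const[OF hol bd True, of 2] by simp
  next
    case False
    then have lt: "norm (\<omega> 0) < 1" using le by simp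
    obtain \<omega>1 where hol1: "\<omega>1 holomorphic_on ball 0 1" and bd1: "\<And>z. z \<in> ball 0 1 \<Longrightarrow> norm (\<omega>1 z) \<le> 1"
      and s1: "fps_nth (fps_expansion \<omega> 0) 1 = (1 - cnj (\<omega> 0) * \<omega> 0) * fps_nth (fps_expansion \<omega>1 0) 0"
      and s2: "fps_nth (fps_expansion \<omega> 0) 2 = (1 - cnj (\<omega> 0) * \<omega> 0) * fps_nth (fps_expansion \<omega>1 0) 1
        - cnj (\<omega> 0) * fps_nth (fps_expansion \<omega> 0) 1 * fps_nth (fps_expansion \<omega>1 0) 0"
      using schur_step[OF hol bd lt] by blast
    define c where "c = \<omega> 0"
    define x where "x = norm c"
    define s where "s = 1 - x^2"
    define p1 where "p1 = fps_nth (fps_expansion \<omega>1 0) 0"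
    define p2 where "p2 = fps_nth (fps_expansion \<omega>1 0) 1"
    define u where "u = norm p1"
    have SP1: "norm p2 \<le> 1 - u^2" using schur_SP[OF hol1 bd1] unfolding p1_def p2_def u_def .
    have "u^2 \<le> 1^2" using SP1 norm_ge_zero[of p2] by (simp del: norm_ge_zero)
    then have u1: "u \<le> 1" by (rule power2_le_imp_le) simp
    have x01: "0 \<le> x" "x < 1" using lt unfolding x_def c_def by auto
    have S: "1 - cnj c * c = complex_of_real s" unfolding s_def x_def by (rule cnj_mult_self)
    have cc: "c * cnj c = complex_of_real (x^2)" unfolding x_def by (simp only: complex_norm_square)
    have W1: "fps_nth (fps_expansion \<omega> 0) 1 = of_real s * p1" using s1 S unfolding c_def p1_def by simp
    have W2: "fps_nth (fps_expansion \<omega> 0) 2 = of_real s * p2 - cnj c * (of_real s * p1) * p1"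
      using s2 S W1 unfolding c_def p1_def p2_def by simp
    have eq: "4 * c * (of_real s * p2 - cnj c * (of_real s * p1) * p1) - 3 * (of_real s * p1)^2
        = of_real s * (4 * c * p2 - 4 * (c * cnj c) * p1^2 - 3 * of_real s * p1^2)"
      by (simp add: algebra_simps power2_eq_square)
    have s0: "0 \<le> s" using x01 unfolding s_def by (simp add: power_le_one)
    have "norm (4 * c * p2 - 4 * (c * cnj c) * p1^2 - 3 * of_real s * p1^2)
        \<le> norm (4 * c * p2) + norm (4 * (c * cnj c) * p1^2) + norm (3 * of_real s * p1^2)"
      by (rule order_trans[OF norm_triangle_ineq4]) (simp add: norm_triangle_ineq4)
    also have "\<dots> = 4 * x * norm p2 + 4 * x^2 * u^2 + 3 * s * u^2"
      unfolding cc using s0 x01 by (simp add: norm_mult norm_power x_def u_def)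
    also have "\<dots> \<le> 4 * x * (1 - u^2) + 4 * x^2 * u^2 + 3 * s * u^2"
      using SP1 x01 by (simp add: mult_left_mono)
    finally have nb: "norm (4 * c * p2 - 4 * (c * cnj c) * p1^2 - 3 * of_real s * p1^2)
        \<le> 4 * x * (1 - u^2) + (4 * x^2 + 3 * s) * u^2" by (simp add: algebra_simps)
    have "norm (4 * fps_nth (fps_expansion \<omega> 0) 0 * fps_nth (fps_expansion \<omega> 0) 2
               - 3 * (fps_nth (fps_expansion \<omega> 0) 1)^2)
        = s * norm (4 * c * p2 - 4 * (c * cnj c) * p1^2 - 3 * of_real s * p1^2)"
      unfolding W0 W1 W2 c_def[symmetric] eq using s0 by (simp add: norm_mult)
    also have "\<dots> \<le> s * (4 * x * (1 - u^2) + (4 * x^2 + 3 * s) * u^2)"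
      using nb s0 by (rule mult_left_mono)
    also have "\<dots> \<le> 3" using carlson_real[OF x01 s_def _ u1] unfolding u_def by simp
    finally show ?thesis .
  qed
qed

lemma example_U:
  fixes \<alpha> :: complex and k :: nat
  assumes k: "k \<ge> 2" and a: "(real k - 1) * cmod \<alpha> \<le> 1"
  shows "(\<lambda>z. z / (1 - \<alpha> * z^k)) \<in> class_U"
proof -
  have k1: "real k - 1 \<ge> 1" using k by simp
  have "cmod \<alpha> \<le> (real k - 1) * cmod \<alpha>" using k1 by (simp add: mult_le_cancel_right1)
  then have a1: "cmod \<alpha> \<le> 1" using a by linarith
  have lt: "cmod (\<alpha> * z^k) < 1" if "z \<in> ball 0 1" for z
  proof -
    have "cmod z ^ k < 1" using that k by (simp add: power_less_one_iff)
    moreover have "cmod \<alpha> * cmod z ^ k \<le> cmod z ^ k" using a1 by (simp add: mult_left_le_one_le)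
    ultimately have "cmod \<alpha> * cmod z ^ k < 1" by linarith
    then show ?thesis by (simp add: norm_mult norm_power)
  qed
  have nz: "1 - \<alpha> * z^k \<noteq> 0" if "z \<in> ball 0 1" for z
    using lt[OF that] by auto
  have hol: "(\<lambda>z. z / (1 - \<alpha> * z^k)) holomorphic_on ball 0 1"
    using nz by (intro holomorphic_intros) auto
  have der: "deriv (\<lambda>z. z / (1 - \<alpha> * z^k)) z = (1 - \<alpha> * z^k + of_nat k * \<alpha> * z^k) / (1 - \<alpha> * z^k)^2"
    if "z \<in> ball 0 1" for z
  proof -
    have zk: "z * z^(k-1) = z^k" using k by (cases k) auto
    have "((\<lambda>z. z / (1 - \<alpha> * z^k)) has_field_derivative
       (1 * (1 - \<alpha> * z^k) - z * (- (\<alpha> * (of_nat k * z^(k-1))))) / (1 - \<alpha> * z^k)^2) (at z)"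
      using nz[OF that]
      by (auto intro!: derivative_eq_intros simp: power2_eq_square simp del: mult_minus_right)
    moreover have "(1 * (1 - \<alpha> * z^k) - z * (- (\<alpha> * (of_nat k * z^(k-1))))) / (1 - \<alpha> * z^k)^2 = (1 - \<alpha> * z^k + of_nat k * \<alpha> * z^k) / (1 - \<alpha> * z^k)^2"
    proof -
      have "z * (\<alpha> * (of_nat k * z^(k-1))) = of_nat k * \<alpha> * (z * z^(k-1))" by (simp only: ac_simps)
      then show ?thesis unfolding zk by simp
    qed
    ultimately have "((\<lambda>z. z / (1 - \<alpha> * z^k)) has_field_derivative (1 - \<alpha> * z^k + of_nat k * \<alpha> * z^k) / (1 - \<alpha> * z^k)^2) (at z)"
      by (rule DERIV_cong)
    then show ?thesis by (rule DERIV_imp_deriv)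
  qed
  show ?thesis
    unfolding class_U_def class_A_def
  proof (intro CollectI conjI ballI)
    show "(\<lambda>z. z / (1 - \<alpha> * z^k)) holomorphic_on ball 0 1" by (rule hol)
    show "0 / (1 - \<alpha> * 0^k) = 0" by simp
    have z0k: "(0::complex)^k = 0" using k by simp
    show "deriv (\<lambda>z. z / (1 - \<alpha> * z^k)) 0 = 1" using der[of 0, unfolded z0k] by simp
  next
    fix z :: complex assume z: "z \<in> ball 0 1 - {0}"
    then have zb: "z \<in> ball 0 1" and z0: "z \<noteq> 0" by auto
    show "z / (1 - \<alpha> * z^k) \<noteq> 0" using nz[OF zb] z0 by simp
    have "(z / (z / (1 - \<alpha> * z^k)))^2 * deriv (\<lambda>z. z / (1 - \<alpha> * z^k)) z - 1
          = (of_nat k - 1) * \<alpha> * z^k"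
    proof -
      have e1: "z / (z / (1 - \<alpha> * z^k)) = 1 - \<alpha> * z^k" using nz[OF zb] z0 by simp
      have e2: "(1 - \<alpha> * z^k)^2 * ((1 - \<alpha> * z^k + of_nat k * \<alpha> * z^k) / (1 - \<alpha> * z^k)^2)
           = 1 - \<alpha> * z^k + of_nat k * \<alpha> * z^k" using nz[OF zb] by simp
      have "(z / (z / (1 - \<alpha> * z^k)))^2 * deriv (\<lambda>z. z / (1 - \<alpha> * z^k)) z - 1
         = (1 - \<alpha> * z^k)^2 * ((1 - \<alpha> * z^k + of_nat k * \<alpha> * z^k) / (1 - \<alpha> * z^k)^2) - 1"
        by (simp only: der[OF zb] e1)
      also have "\<dots> = (1 - \<alpha> * z^k + of_nat k * \<alpha> * z^k) - 1" by (simp only: e2)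
      also have "\<dots> = (of_nat k - 1) * \<alpha> * z^k" by (simp add: algebra_simps)
      finally show ?thesis .
    qed
    moreover have "cmod ((of_nat k - 1) * \<alpha> * z^k) < 1"
    proof -
      have "cmod ((of_nat k - 1) * \<alpha> * z^k) = ((real k - 1) * cmod \<alpha>) * cmod z ^ k"
      proof -
        have "(of_nat k - 1 :: complex) = of_real (real k - 1)" by simp
        then have "cmod (of_nat k - 1 :: complex) = real k - 1" using k1 by (simp only: norm_of_real)
        then show ?thesis by (simp add: norm_mult norm_power)
      qed
      also have "\<dots> \<le> cmod z ^ k" using a k1 by (intro mult_left_le_one_le) auto
      also have "\<dots> < 1" using zb k by (simp add: power_less_one_iff)
      finally show ?thesis .
    qed
    ultimately show "cmod ((z / (z / (1 - \<alpha> * z^k)))^2 * deriv (\<lambda>z. z / (1 - \<alpha> * z^k)) z - 1) < 1"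
      by simp
  qed
qed




lemma a2_bound:
  assumes holg: "g holomorphic_on ball 0 1" and g0: "g 0 = 1" and gnz: "\<And>z. z \<in> ball 0 1 \<Longrightarrow> g z \<noteq> 0"
    and hol\<omega>: "\<omega> holomorphic_on ball 0 1" and bd\<omega>: "\<And>z. z \<in> ball 0 1 \<Longrightarrow> norm (\<omega> z) \<le> 1"
    and eq: "\<And>z. z \<in> ball 0 1 \<Longrightarrow> g z - z * deriv g z - 1 = z^2 * \<omega> z"
  shows "norm (deriv g 0) \<le> 2"
proof -
  have holg1: "(\<lambda>z. g z - 1) holomorphic_on ball 0 1" by (intro holomorphic_intros holg)
  obtain Fh where holF: "Fh holomorphic_on ball 0 1" and eqF: "\<And>z. norm z < 1 \<Longrightarrow> g z - 1 = z * Fh z"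
      and dF: "deriv (\<lambda>z. g z - 1) 0 = Fh 0"
    using Schwarz3[OF holg1] g0 by auto
  have dg: "(g has_field_derivative deriv g z) (at z)" if "z \<in> ball 0 1" for z
    using holomorphic_derivI[OF holg open_ball that] .
  have "((\<lambda>z. g z - 1) has_field_derivative deriv g 0) (at 0)"
    using dg[of 0] by (auto intro!: derivative_eq_intros)
  then have F0: "Fh 0 = deriv g 0" using dF DERIV_imp_deriv by metis
  have dFh: "(Fh has_field_derivative deriv Fh z) (at z)" if "z \<in> ball 0 1" for z
    using holomorphic_derivI[OF holF open_ball that] .
  have dg2: "deriv g z = Fh z + z * deriv Fh z" if z: "z \<in> ball 0 1" for z
  proof -
    have "((\<lambda>w. 1 + w * Fh w) has_field_derivative (1 * Fh z + z * deriv Fh z)) (at z)"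
      using dFh[OF z] by (auto intro!: derivative_eq_intros)
    then have "(g has_field_derivative (1 * Fh z + z * deriv Fh z)) (at z)"
    proof (rule has_field_derivative_transform_within_open[OF _ open_ball z])
      fix x :: complex assume "x \<in> ball 0 1"
      then have "g x - 1 = x * Fh x" using eqF by simp
      then show "1 + x * Fh x = g x" by (simp add: algebra_simps)
    qed
    then show ?thesis by (simp add: DERIV_imp_deriv)
  qed
  have eq2: "z^2 * \<omega> z = z^2 * (- deriv Fh z)" if z: "z \<in> ball 0 1" for z
  proof -
    have "g z = 1 + z * Fh z" using eqF[of z] z by (simp add: diff_eq_eq add.commute)
    then show ?thesis using eq[OF z] dg2[OF z] by (simp add: algebra_simps power2_eq_square)
  qed
  have dFw: "deriv Fh z = - \<omega> z" if z: "z \<in> ball 0 1" for z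
  proof (cases "z = 0")
    case False
    then have "z^2 \<noteq> 0" by simp
    then have "\<omega> z = - deriv Fh z" using eq2[OF z] mult_left_cancel by blast
    then show ?thesis by simp
  next
    case True
    have holdF: "deriv Fh holomorphic_on ball 0 1" by (intro holomorphic_intros holF) auto
    have e1: "(\<lambda>z. z^2 * \<omega> z) has_fps_expansion fps_X^2 * fps_expansion \<omega> 0"
      by (intro has_fps_expansion_mult has_fps_expansion_fps_X_power hol_fps hol\<omega>)
    have e2: "(\<lambda>z. z^2 * (- deriv Fh z)) has_fps_expansion fps_X^2 * (- fps_expansion (deriv Fh) 0)"
      by (intro has_fps_expansion_mult has_fps_expansion_minus has_fps_expansion_fps_X_power hol_fps holdF)
    have "fps_X^2 * fps_expansion \<omega> 0 = fps_X^2 * (- fps_expansion (deriv Fh) 0)"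
      by (rule fps_exp_unique[OF e1 e2 ev_ball_eq]) (rule eq2)
    then have "fps_nth (fps_X^2 * fps_expansion \<omega> 0) 2 = fps_nth (fps_X^2 * (- fps_expansion (deriv Fh) 0)) 2"
      by simp
    then have "\<omega> 0 = - deriv Fh 0" by (simp add: fps_X_power_mult_nth fps_expansion_def)
    then show ?thesis using True by simp
  qed
  have mvt: "norm (Fh z - Fh 0) \<le> norm z" if z: "z \<in> ball 0 1" for z
  proof -
    have "norm (Fh z - Fh 0) \<le> 1 * norm (z - 0)"
    proof (rule field_differentiable_bound[of "ball 0 1" Fh "deriv Fh"])
      show "convex (ball (0::complex) 1)" by simp
      show "(Fh has_field_derivative deriv Fh w) (at w within ball 0 1)" if "w \<in> ball 0 1" for w
        using holomorphic_derivI[OF holF open_ball that] .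
      show "norm (deriv Fh w) \<le> 1" if "w \<in> ball 0 1" for w using dFw[OF that] bd\<omega>[OF that] by simp
    qed (use z in auto)
    then show ?thesis by simp
  qed
  have nz: "inverse z + Fh z \<noteq> 0" if z: "z \<in> ball 0 1" "z \<noteq> 0" for z
  proof -
    have "g z = 1 + z * Fh z" using eqF[of z] z by (simp add: diff_eq_eq add.commute)
    then have "inverse z + Fh z = g z / z" using z by (simp add: field_simps)
    then show ?thesis using gnz[OF z(1)] z by simp
  qed
  show ?thesis
  proof (rule ccontr)
    assume "\<not> norm (deriv g 0) \<le> 2"
    then have b2: "norm (Fh 0) > 2" using F0 by simp
    define b where "b = Fh 0"
    define S where "S = cball (-b) (norm b / 2)"
    have wS: "norm w \<ge> norm b / 2" if "w \<in> S" for w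
    proof -
      have "-b - w = -(w + b)" by simp
      then have "norm (-b - w) = norm (w + b)" by (metis norm_minus_cancel)
      then have "norm (w + b) \<le> norm b / 2" using that unfolding S_def by (simp add: dist_norm)
      moreover have "norm b \<le> norm w + norm (w + b)"
        using norm_triangle_ineq4[of "w + b" w] by (simp add: norm_minus_commute)
      ultimately show ?thesis by linarith
    qed
    have w1: "norm w > 1" if "w \<in> S" for w using wS[OF that] b2 unfolding b_def by linarith
    have invS: "inverse w \<in> ball 0 1" if "w \<in> S" for w
      using w1[OF that] by (simp add: norm_inverse inverse_less_1_iff)
    have invnz: "w \<noteq> 0" if "w \<in> S" for w using w1[OF that] by auto
    have cont: "continuous_on S (\<lambda>w. - Fh (inverse w))"
    proof (intro continuous_on_minus continuous_on_compose2[of "ball 0 1" Fh S inverse])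
      show "continuous_on (ball 0 1) Fh" using holF by (rule holomorphic_on_imp_continuous_on)
      show "continuous_on S inverse" using invnz by (intro continuous_on_inverse continuous_on_id) auto
      show "inverse ` S \<subseteq> ball 0 1" using invS by auto
    qed
    have maps: "(\<lambda>w. - Fh (inverse w)) \<in> S \<rightarrow> S"
    proof
      fix w assume w: "w \<in> S"
      have "norm (Fh (inverse w) - Fh 0) \<le> norm (inverse w)" by (rule mvt[OF invS[OF w]])
      also have "\<dots> = 1 / norm w" by (simp add: norm_inverse divide_inverse)
      also have "\<dots> \<le> 1 / (norm b / 2)"
      proof (rule divide_left_mono)
        show "norm b / 2 \<le> norm w" using wS[OF w] .
        show "0 < norm w * (norm b / 2)"
        proof (rule mult_pos_pos)
          show "0 < norm w" using w1[OF w] by linarith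
          show "0 < norm b / 2" using b2 unfolding b_def by linarith
        qed
      qed simp
      also have "\<dots> \<le> norm b / 2"
      proof -
        have "2 * 2 < norm b * norm b" using b2 unfolding b_def by (intro mult_strict_mono) auto
        then have "4 \<le> norm b * norm b" by simp
        moreover have "0 < norm b" using b2 unfolding b_def by linarith
        ultimately have "4 / norm b \<le> norm b" by (simp add: divide_le_eq)
        then show ?thesis by simp
      qed
      finally show "- Fh (inverse w) \<in> S" unfolding S_def b_def
        by (simp add: dist_norm norm_minus_commute)
    qed
    have "norm b / 2 > 0" using b2 unfolding b_def by linarith
    then obtain w where w: "w \<in> S" and fx: "- Fh (inverse w) = w"
      using brouwer_ball[of "norm b / 2" "-b" "\<lambda>w. - Fh (inverse w)"] cont maps unfolding S_def by blast
    have "inverse (inverse w) + Fh (inverse w) = 0" proof -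
      have "w + Fh (inverse w) = - Fh (inverse w) + Fh (inverse w)" using fx by simp
      then show ?thesis by simp
    qed
    moreover have "inverse w \<noteq> 0" using invnz[OF w] by simp
    ultimately show False using nz[OF invS[OF w]] by blast
  qed
qed




lemma main_bounds:
  assumes fU: "f \<in> class_U"
  shows "cmod (H22 f) \<le> 1 \<and> cmod (H31 f) \<le> 1/4"
proof -
  have hol: "f holomorphic_on ball 0 1" and f0: "f 0 = 0" and d1: "deriv f 0 = 1"
    and nzf: "\<And>z. z \<in> ball 0 1 \<Longrightarrow> z \<noteq> 0 \<Longrightarrow> f z \<noteq> 0"
    and U: "\<And>z. z \<in> ball 0 1 \<Longrightarrow> z \<noteq> 0 \<Longrightarrow> cmod ((z / f z)^2 * deriv f z - 1) < 1"
    using fU unfolding class_U_def class_A_def by auto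
  obtain q where holq: "q holomorphic_on ball 0 1" and eqf: "\<And>z. norm z < 1 \<Longrightarrow> f z = z * q z"
      and q0: "deriv f 0 = q 0"
    using Schwarz3[OF hol f0] by blast
  have q01: "q 0 = 1" using q0 d1 by simp
  have qnz: "q z \<noteq> 0" if z: "z \<in> ball 0 1" for z
  proof (cases "z = 0")
    case True then show ?thesis using q01 by simp
  next
    case False then show ?thesis using nzf[OF z False] eqf[of z] z by auto
  qed
  define g where "g z = inverse (q z)" for z
  have holg: "g holomorphic_on ball 0 1" unfolding g_def using qnz by (intro holomorphic_intros holq) auto
  have g0: "g 0 = 1" unfolding g_def using q01 by simp
  have gnz: "g z \<noteq> 0" if "z \<in> ball 0 1" for z unfolding g_def using qnz[OF that] by simp
  define F where "F = fps_expansion f 0"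
  define G where "G = fps_expansion g 0"
  have hF: "f has_fps_expansion F" unfolding F_def by (rule hol_fps[OF hol])
  have hG: "g has_fps_expansion G" unfolding G_def by (rule hol_fps[OF holg])
  have FG: "F * G = fps_X"
  proof (rule fps_exp_unique[OF has_fps_expansion_mult[OF hF hG] has_fps_expansion_fps_X ev_ball_eq])
    fix z :: complex assume z: "z \<in> ball 0 1"
    show "f z * g z = z" using eqf[of z] z qnz[OF z] unfolding g_def by simp
  qed
  have G0: "fps_nth G 0 = 1" unfolding G_def using g0 by (simp add: fps_expansion_def)
  have G1: "fps_nth G 1 = deriv g 0" unfolding G_def by (simp add: fps_expansion_def)
  note HH = coeffs_from_G[OF hF FG G0]
  have dq: "(q has_field_derivative deriv q z) (at z)" if "z \<in> ball 0 1" for z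
    using holomorphic_derivI[OF holq open_ball that] .
  have df: "deriv f z = q z + z * deriv q z" if z: "z \<in> ball 0 1" for z
  proof -
    have "((\<lambda>w. w * q w) has_field_derivative (1 * q z + z * deriv q z)) (at z)"
      using dq[OF z] by (auto intro!: derivative_eq_intros)
    then have "(f has_field_derivative (1 * q z + z * deriv q z)) (at z)"
    proof (rule has_field_derivative_transform_within_open[OF _ open_ball z])
      fix x :: complex assume "x \<in> ball 0 1"
      then show "x * q x = f x" using eqf by simp
    qed
    then show ?thesis by (simp add: DERIV_imp_deriv)
  qed
  have dg: "deriv g z = - (deriv q z * inverse (q z ^ Suc (Suc 0)))" if z: "z \<in> ball 0 1" for z
  proof -
    have "(g has_field_derivative - (deriv q z * inverse (q z ^ Suc (Suc 0)))) (at z)"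
      unfolding g_def by (rule DERIV_inverse_fun[OF dq[OF z] qnz[OF z]])
    then show ?thesis by (rule DERIV_imp_deriv)
  qed
  define h where "h z = g z - z * deriv g z - 1" for z
  have holh: "h holomorphic_on ball 0 1" unfolding h_def
    by (intro holomorphic_intros holg holomorphic_deriv) auto
  have h0: "h 0 = 0" unfolding h_def using g0 by simp
  have hU: "h z = (z / f z)^2 * deriv f z - 1" if z: "z \<in> ball 0 1" and z0: "z \<noteq> 0" for z
  proof -
    have fz: "f z = z * q z" using eqf[of z] z by simp
    show ?thesis unfolding h_def g_def dg[OF z] df[OF z] fz using qnz[OF z] z0
      by (simp add: field_simps power2_eq_square)
  qed
  have hbd: "norm (h z) \<le> 1" if z: "z \<in> ball 0 1" for z
  proof (cases "z = 0")
    case True then show ?thesis using h0 by simp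
  next
    case False then show ?thesis using U[OF z False] hU[OF z False] by simp
  qed
  define Hx where "Hx = G - fps_X * fps_deriv G - 1"
  have hH: "h has_fps_expansion Hx"
  proof -
    have "(\<lambda>z. g z - z * deriv g z - 1) has_fps_expansion Hx" unfolding Hx_def
      by (intro has_fps_expansion_diff has_fps_expansion_mult has_fps_expansion_fps_X
          has_fps_expansion_deriv hG has_fps_expansion_1)
    then show ?thesis unfolding h_def[abs_def] .
  qed
  have Hn: "fps_nth Hx n = fps_nth G n - of_nat n * fps_nth G n" if "n \<ge> 1" for n
    using that unfolding Hx_def by (cases n) (auto simp: algebra_simps)
  obtain h1 where holh1: "h1 holomorphic_on ball 0 1" and bdh1: "\<And>z. z \<in> ball 0 1 \<Longrightarrow> norm (h1 z) \<le> 1"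
      and eqh1: "\<And>z. z \<in> ball 0 1 \<Longrightarrow> h z = z * h1 z"
    using schwarz_factor[OF holh h0 hbd] by blast
  have XH1: "fps_X * fps_expansion h1 0 = Hx"
    by (rule fps_exp_unique[OF has_fps_expansion_mult[OF has_fps_expansion_fps_X hol_fps[OF holh1]] hH ev_ball_eq])
       (simp add: eqh1)
  have h10: "h1 0 = 0"
  proof -
    have "fps_nth (fps_X * fps_expansion h1 0) 1 = fps_nth Hx 1" using XH1 by simp
    then show ?thesis using Hn[of 1] by (simp add: fps_expansion_def)
  qed
  obtain \<omega> where hol\<omega>: "\<omega> holomorphic_on ball 0 1" and bd\<omega>: "\<And>z. z \<in> ball 0 1 \<Longrightarrow> norm (\<omega> z) \<le> 1"
      and eq\<omega>: "\<And>z. z \<in> ball 0 1 \<Longrightarrow> h1 z = z * \<omega> z"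
    using schwarz_factor[OF holh1 h10 bdh1] by blast
  define W where "W = fps_expansion \<omega> 0"
  have XXW: "fps_X * (fps_X * W) = Hx"
    unfolding W_def
    by (rule fps_exp_unique[OF has_fps_expansion_mult[OF has_fps_expansion_fps_X
          has_fps_expansion_mult[OF has_fps_expansion_fps_X hol_fps[OF hol\<omega>]]] hH ev_ball_eq])
       (simp add: eqh1 eq\<omega>)
  have Wk: "fps_nth W k = fps_nth Hx (k + 2)" for k
  proof -
    have "fps_nth (fps_X * (fps_X * W)) (k + 2) = fps_nth Hx (k + 2)" using XXW by simp
    then show ?thesis by simp
  qed
  have W0: "fps_nth W 0 = - fps_nth G 2" using Wk[of 0] Hn[of 2] by (simp add: eval_nat_numeral)
  have W1: "fps_nth W 1 = - 2 * fps_nth G 3" using Wk[of 1] Hn[of 3] by (simp add: eval_nat_numeral)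
  have W2: "fps_nth W 2 = - 3 * fps_nth G 4" using Wk[of 2] Hn[of 4] by (simp add: eval_nat_numeral)
  have SP: "norm (fps_nth W 1) \<le> 1 - (norm (fps_nth W 0))^2" unfolding W_def by (rule schur_SP[OF hol\<omega> bd\<omega>])
  have CL: "norm (4 * fps_nth W 0 * fps_nth W 2 - 3 * (fps_nth W 1)^2) \<le> 3"
    unfolding W_def by (rule schur_carlson[OF hol\<omega> bd\<omega>])
  have b1: "norm (fps_nth G 1) \<le> 2"
  proof -
    have "norm (deriv g 0) \<le> 2"
    proof (rule a2_bound[OF holg g0 gnz hol\<omega> bd\<omega>])
      fix z :: complex assume z: "z \<in> ball 0 1"
      show "g z - z * deriv g z - 1 = z^2 * \<omega> z"
        using eqh1[OF z] eq\<omega>[OF z] unfolding h_def by (simp add: power2_eq_square)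
    qed
    then show ?thesis using G1 by simp
  qed
  have H31: "H31 f = (4 * fps_nth W 0 * fps_nth W 2 - 3 * (fps_nth W 1)^2) / 12"
    unfolding HH(2) W0 W1 W2 by (simp add: algebra_simps power2_eq_square)
  have H22: "H22 f = - fps_nth G 1 * fps_nth W 1 / 2 - (fps_nth W 0)^2"
    unfolding HH(1) W0 W1 by (simp add: algebra_simps power2_eq_square)
  have "cmod (H31 f) \<le> 1/4" unfolding H31 using CL by (simp add: norm_divide)
  moreover have "cmod (H22 f) \<le> 1"
  proof -
    have "cmod (H22 f) \<le> norm (fps_nth G 1) * norm (fps_nth W 1) / 2 + (norm (fps_nth W 0))^2"
      unfolding H22 by (rule order_trans[OF norm_triangle_ineq4]) (simp add: norm_mult norm_divide norm_power)
    also have "\<dots> \<le> 2 * norm (fps_nth W 1) / 2 + (norm (fps_nth W 0))^2"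
    proof -
      have "norm (fps_nth G 1) * norm (fps_nth W 1) \<le> 2 * norm (fps_nth W 1)"
        using b1 by (rule mult_right_mono) simp
      then show ?thesis by simp
    qed
    also have "\<dots> \<le> 1" using SP by simp
    finally show ?thesis .
  qed
  ultimately show ?thesis by simp
qed



lemma example_FG:
  fixes \<alpha> :: complex and k :: nat
  assumes k: "k \<ge> 2" and a: "(real k - 1) * cmod \<alpha> \<le> 1" and a1: "cmod \<alpha> \<le> 1"
  shows "(\<lambda>z. z / (1 - \<alpha> * z^k)) has_fps_expansion fps_expansion (\<lambda>z. z / (1 - \<alpha> * z^k)) 0"
    and "fps_expansion (\<lambda>z. z / (1 - \<alpha> * z^k)) 0 * (1 - fps_const \<alpha> * fps_X^k) = fps_X"
proof -
  have hol: "(\<lambda>z. z / (1 - \<alpha> * z^k)) holomorphic_on ball 0 1"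
    using example_U[OF k a] unfolding class_U_def class_A_def by auto
  show hF: "(\<lambda>z. z / (1 - \<alpha> * z^k)) has_fps_expansion fps_expansion (\<lambda>z. z / (1 - \<alpha> * z^k)) 0"
    by (rule hol_fps[OF hol])
  have hG: "(\<lambda>z. 1 - \<alpha> * z^k) has_fps_expansion (1 - fps_const \<alpha> * fps_X^k)"
    by (intro has_fps_expansion_diff has_fps_expansion_1 has_fps_expansion_cmult_left has_fps_expansion_fps_X_power)
  show "fps_expansion (\<lambda>z. z / (1 - \<alpha> * z^k)) 0 * (1 - fps_const \<alpha> * fps_X^k) = fps_X"
  proof (rule fps_exp_unique[OF has_fps_expansion_mult[OF hF hG] has_fps_expansion_fps_X ev_ball_eq])
    fix z :: complex assume z: "z \<in> ball 0 1"
    have "cmod z ^ k < 1" using z k by (simp add: power_less_one_iff)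
    moreover have "cmod \<alpha> * cmod z ^ k \<le> cmod z ^ k" using a1 by (simp add: mult_left_le_one_le)
    ultimately have "cmod (\<alpha> * z^k) < 1" by (simp add: norm_mult norm_power)
    then have "1 - \<alpha> * z^k \<noteq> 0" by auto
    then show "z / (1 - \<alpha> * z^k) * (1 - \<alpha> * z^k) = z" by simp
  qed
qed

lemma sharp22: "\<exists>f \<in> class_U. cmod (H22 f) = 1"
proof
  have k: "(2::nat) \<ge> 2" and a: "(real 2 - 1) * cmod (1::complex) \<le> 1" and a1: "cmod (1::complex) \<le> 1" by auto
  note e = example_FG[OF k a a1]
  have G0: "fps_nth (1 - fps_const (1::complex) * fps_X^2) 0 = 1" by simp
  have "H22 (\<lambda>z. z / (1 - 1 * z^2)) = -1"
    using coeffs_from_G(1)[OF e(1) e(2) G0] by simp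
  then show "cmod (H22 (\<lambda>z. z / (1 - 1 * z^2))) = 1" by simp
  show "(\<lambda>z. z / (1 - 1 * z^2)) \<in> class_U" using example_U[OF k a] by simp
qed

lemma sharp31: "\<exists>f \<in> class_U. cmod (H31 f) = 1/4"
proof
  have k: "(3::nat) \<ge> 2" and a: "(real 3 - 1) * cmod (1/2::complex) \<le> 1" and a1: "cmod (1/2::complex) \<le> 1" by auto
  note e = example_FG[OF k a a1]
  have G0: "fps_nth (1 - fps_const (1/2::complex) * fps_X^3) 0 = 1" by simp
  have "H31 (\<lambda>z. z / (1 - 1/2 * z^3)) = -1/4"
    using coeffs_from_G(2)[OF e(1) e(2) G0] by (simp add: power2_eq_square)
  then show "cmod (H31 (\<lambda>z. z / (1 - 1/2 * z^3))) = 1/4" by simp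
  show "(\<lambda>z. z / (1 - 1/2 * z^3)) \<in> class_U" using example_U[OF k a] by simp
qed


theorem theorem1:
  shows "(\<forall>f \<in> class_U. cmod (H22 f) \<le> 1 \<and> cmod (H31 f) \<le> 1/4)
       \<and> (\<exists>f \<in> class_U. cmod (H22 f) = 1)
       \<and> (\<exists>f \<in> class_U. cmod (H31 f) = 1/4)"
  using main_bounds sharp22 sharp31 by blast

end
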